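(* Let $(\mu^{(n)},\nu^{(n)})_{n\in\mathbb N}$ be a sequence in $\mathcal M_{\mathrm{tem}}(\mathbb R)^2$ (or in $\mathcal M_{\mathrm{rap}}(\mathbb R)^2$) converging to $(\mu,\nu)$, and assume $R(\mu^{(n)})\le L(\nu^{(n)})$ for all $n$. Then $$R(\mu)\le\liminf_{n\to\infty}R(\mu^{(n)})\le\limsup_{n\to\infty}L(\nu^{(n)})\le L(\nu).$$
   Context: $\phi_\lambda(x)=e^{-\lambda|x|}$. $\mathcal M_{\mathrm{tem}}(\mathbb R)$: nonnegative Radon measures with $\int\phi_\lambda d\mu<\infty$ for all $\lambda>0$, with $\mu_n\to\mu$ iff $\int\varphi d\mu_n\to\int\varphi d\mu$ for every continuous $\varphi$ such that, for some $\lambda>0$, $\sup|\varphi|/\phi_\lambda<\infty$ and $\varphi/\phi_\lambda$ has finite limits at $\pm\infty$. $\mathcal M_{\mathrm{rap}}(\mathbb R)$: those with $\int\phi_{-\lambda}d\mu<\infty$ for all $\lambda>0$, with $\mu_n\to\mu$ iff weak convergence as finite measures and $\sup_n\int\phi_{-\lambda}d\mu_n<\infty$ for all $\lambda>0$. ${\rm supp}(\mu)=\{x:\mu(B_\varepsilon(x))>0\ \forall\varepsilon>0\}$, $R(\mu)=\sup{\rm supp}(\mu)$, $L(\mu)=\inf{\rm supp}(\mu)$ in $\bar{\mathbb R}$ (with $\sup\emptyset=-\infty$, $\inf\emptyset=+\infty$). *)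

theory Defs
  imports "HOL-Analysis.Analysis"
begin

definition phiw :: "real \<Rightarrow> real \<Rightarrow> real" where
  "phiw l x = exp (- l * \<bar>x\<bar>)"

definition radon :: "real measure \<Rightarrow> bool" where
  "radon \<mu> \<longleftrightarrow> sets \<mu> = sets borel \<and> (\<forall>K. compact K \<longrightarrow> emeasure \<mu> K < \<infinity>)"

definition Mtem :: "real measure set" where
  "Mtem = {\<mu>. radon \<mu> \<and> (\<forall>l>0. (\<integral>\<^sup>+x. ennreal (phiw l x) \<partial>\<mu>) < \<infinity>)}"

definition Mrap :: "real measure set" where
  "Mrap = {\<mu>. radon \<mu> \<and> (\<forall>l>0. (\<integral>\<^sup>+x. ennreal (phiw (- l) x) \<partial>\<mu>) < \<infinity>)}"

definition tem_test :: "(real \<Rightarrow> real) \<Rightarrow> bool" where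
  "tem_test f \<longleftrightarrow> continuous_on UNIV f \<and>
     (\<exists>l>0. (\<exists>C. \<forall>x. \<bar>f x\<bar> \<le> C * phiw l x) \<and>
            (\<exists>a. ((\<lambda>x. f x / phiw l x) \<longlongrightarrow> a) at_top) \<and>
            (\<exists>b. ((\<lambda>x. f x / phiw l x) \<longlongrightarrow> b) at_bot))"

definition conv_tem :: "(nat \<Rightarrow> real measure) \<Rightarrow> real measure \<Rightarrow> bool" where
  "conv_tem \<mu>s \<mu> \<longleftrightarrow>
     (\<forall>f. tem_test f \<longrightarrow> (\<lambda>n. integral\<^sup>L (\<mu>s n) f) \<longlonglongrightarrow> integral\<^sup>L \<mu> f)"

definition conv_rap :: "(nat \<Rightarrow> real measure) \<Rightarrow> real measure \<Rightarrow> bool" where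
  "conv_rap \<mu>s \<mu> \<longleftrightarrow>
     (\<forall>f::real\<Rightarrow>real. continuous_on UNIV f \<and> bounded (range f) \<longrightarrow>
          (\<lambda>n. integral\<^sup>L (\<mu>s n) f) \<longlonglongrightarrow> integral\<^sup>L \<mu> f) \<and>
     (\<forall>l>0. \<exists>C::ennreal. C < \<infinity> \<and> (\<forall>n. (\<integral>\<^sup>+x. ennreal (phiw (- l) x) \<partial>(\<mu>s n)) \<le> C))"

definition supp :: "real measure \<Rightarrow> real set" where
  "supp \<mu> = {x. \<forall>e>0. emeasure \<mu> (ball x e) > 0}"

definition Rsup :: "real measure \<Rightarrow> ereal" where
  "Rsup \<mu> = Sup (ereal ` supp \<mu>)"

definition Linf :: "real measure \<Rightarrow> ereal" where
  "Linf \<mu> = Inf (ereal ` supp \<mu>)"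

end

theory Submission
  imports Defs
begin

definition tent :: "real \<Rightarrow> real \<Rightarrow> real \<Rightarrow> real" where
  "tent x e y = max 0 (e - \<bar>y - x\<bar>)"

lemma tent_cont: "continuous_on UNIV (tent x e)"
  unfolding tent_def by (intro continuous_intros)

lemma tent_meas: "sets M = sets borel \<Longrightarrow> tent x e \<in> borel_measurable M"
  using borel_measurable_continuous_onI[OF tent_cont] measurable_cong_sets by blast

lemma tent_nonneg: "0 \<le> tent x e y" unfolding tent_def by simp

lemma tent_zero: "y \<notin> cball x e \<Longrightarrow> tent x e y = 0"
  unfolding tent_def by (auto simp: dist_real_def)

lemma tent_le: "0 < e \<Longrightarrow> tent x e y \<le> e * indicator (cball x e) y"
  unfolding tent_def by (auto simp: dist_real_def indicator_def)

lemma tent_ge: "0 < e \<Longrightarrow> (e/2) * indicator (ball x (e/2)) y \<le> tent x e y"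
  unfolding tent_def indicator_def
  by (cases "y \<in> ball x (e/2)") (auto simp: dist_real_def abs_minus_commute)

lemma tent_ge_enn: "0 < e \<Longrightarrow> ennreal (e/2) * indicator (ball x (e/2)) y \<le> ennreal (tent x e y)"
proof (cases "y \<in> ball x (e/2)")
  case True
  assume e: "0 < e"
  have "e/2 \<le> tent x e y" using tent_ge[OF e, of x y] True by simp
  then show ?thesis using True by (simp add: ennreal_leI)
qed simp

lemma tent_le_enn: "0 < e \<Longrightarrow> ennreal (tent x e y) \<le> ennreal e * indicator (cball x e) y"
proof (cases "y \<in> cball x e")
  case True
  assume e: "0 < e"
  have "tent x e y \<le> e" using e unfolding tent_def by auto
  then show ?thesis using True by (simp add: ennreal_leI)
next
  case False then show ?thesis by (simp add: tent_zero)
qed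

lemma radon_cball_fin: "radon M \<Longrightarrow> emeasure M (cball x e) < \<infinity>"
  unfolding radon_def by auto

lemma tent_integral:
  assumes r: "radon M" and e: "0 < e"
  shows "integral\<^sup>L M (tent x e) = enn2real (\<integral>\<^sup>+y. ennreal (tent x e y) \<partial>M)"
    and "(\<integral>\<^sup>+y. ennreal (tent x e y) \<partial>M) \<le> ennreal e * emeasure M (cball x e)"
    and "ennreal (e/2) * emeasure M (ball x (e/2)) \<le> (\<integral>\<^sup>+y. ennreal (tent x e y) \<partial>M)"
proof -
  have s: "sets M = sets borel" using r unfolding radon_def by auto
  show "integral\<^sup>L M (tent x e) = enn2real (\<integral>\<^sup>+y. ennreal (tent x e y) \<partial>M)"
    by (rule integral_eq_nn_integral[OF tent_meas[OF s]]) (auto simp: tent_nonneg)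
  have cb: "cball x e \<in> sets M" "ball x (e/2) \<in> sets M" using s by auto
  have "(\<integral>\<^sup>+y. ennreal (tent x e y) \<partial>M) \<le> (\<integral>\<^sup>+y. ennreal e * indicator (cball x e) y \<partial>M)"
    by (rule nn_integral_mono) (rule tent_le_enn[OF e])
  also have "\<dots> = ennreal e * emeasure M (cball x e)"
    using cb by (simp add: nn_integral_cmult_indicator)
  finally show "(\<integral>\<^sup>+y. ennreal (tent x e y) \<partial>M) \<le> ennreal e * emeasure M (cball x e)" .
  have "ennreal (e/2) * emeasure M (ball x (e/2)) = (\<integral>\<^sup>+y. ennreal (e/2) * indicator (ball x (e/2)) y \<partial>M)"
    using cb by (simp add: nn_integral_cmult_indicator)
  also have "\<dots> \<le> (\<integral>\<^sup>+y. ennreal (tent x e y) \<partial>M)"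
    by (rule nn_integral_mono) (rule tent_ge_enn[OF e])
  finally show "ennreal (e/2) * emeasure M (ball x (e/2)) \<le> (\<integral>\<^sup>+y. ennreal (tent x e y) \<partial>M)" .
qed

lemma tent_pos:
  assumes r: "radon M" and e: "0 < e" and x: "x \<in> supp M"
  shows "integral\<^sup>L M (tent x e) > 0"
proof -
  have p: "emeasure M (ball x (e/2)) > 0" using x e unfolding supp_def by auto
  have "0 < ennreal (e/2) * emeasure M (ball x (e/2))"
    using p e by (simp add: ennreal_zero_less_mult_iff)
  also have "\<dots> \<le> (\<integral>\<^sup>+y. ennreal (tent x e y) \<partial>M)" by (rule tent_integral(3)[OF r e])
  finally have a: "0 < (\<integral>\<^sup>+y. ennreal (tent x e y) \<partial>M)" .
  have "(\<integral>\<^sup>+y. ennreal (tent x e y) \<partial>M) \<le> ennreal e * emeasure M (cball x e)"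
    by (rule tent_integral(2)[OF r e])
  also have "\<dots> < \<infinity>" using radon_cball_fin[OF r, of x e]
    by (simp add: ennreal_mult_less_top)
  finally have b: "(\<integral>\<^sup>+y. ennreal (tent x e y) \<partial>M) < \<infinity>" .
  show ?thesis using a b tent_integral(1)[OF r e]
    by (simp add: enn2real_positive_iff)
qed

lemma null_cball:
  assumes r: "radon M" and d: "cball x e \<inter> supp M = {}"
  shows "emeasure M (cball x e) = 0"
proof -
  have s: "sets M = sets borel" using r unfolding radon_def by auto
  have "\<forall>y\<in>cball x e. \<exists>r>0. emeasure M (ball y r) = 0"
  proof
    fix y assume "y \<in> cball x e"
    then have "y \<notin> supp M" using d by blast
    then obtain r where "r > 0" "\<not> emeasure M (ball y r) > 0" unfolding supp_def by auto
    then show "\<exists>r>0. emeasure M (ball y r) = 0" by (auto simp: not_less)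
  qed
  then obtain rr where rr: "\<And>y. y \<in> cball x e \<Longrightarrow> rr y > 0 \<and> emeasure M (ball y (rr y)) = 0"
    by metis
  have cp: "compact (cball x e)" by simp
  have cov: "cball x e \<subseteq> (\<Union>y\<in>cball x e. ball y (rr y))" using rr by force
  obtain T where T: "T \<subseteq> cball x e" "finite T" "cball x e \<subseteq> (\<Union>y\<in>T. ball y (rr y))"
    apply (rule compactE_image[OF cp _ cov])
     apply (rule open_ball)
    apply (rule that)
      apply assumption+
    done
  have U1: "(\<Union>y\<in>T. ball y (rr y)) \<in> sets borel" by (rule borel_open) auto
  have U: "(\<Union>y\<in>T. ball y (rr y)) \<in> sets M" using U1 s by simp
  have B1: "(\<lambda>y. ball y (rr y)) ` T \<subseteq> sets borel" using borel_open[OF open_ball] by blast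
  have B: "(\<lambda>y. ball y (rr y)) ` T \<subseteq> sets M" using B1 s by simp
  have "emeasure M (cball x e) \<le> emeasure M (\<Union>y\<in>T. ball y (rr y))"
    by (rule emeasure_mono[OF T(3) U])
  also have "\<dots> \<le> (\<Sum>y\<in>T. emeasure M (ball y (rr y)))"
    by (rule emeasure_subadditive_finite[OF T(2) B])
  also have "\<dots> = 0" using T(1) rr by (intro sum.neutral) auto
  finally show ?thesis by simp
qed

lemma tent_zero_int:
  assumes r: "radon M" and e: "0 < e" and d: "cball x e \<inter> supp M = {}"
  shows "integral\<^sup>L M (tent x e) = 0"
proof -
  have "(\<integral>\<^sup>+y. ennreal (tent x e y) \<partial>M) \<le> ennreal e * emeasure M (cball x e)"
    by (rule tent_integral(2)[OF r e])
  also have "\<dots> = 0" using null_cball[OF r d] by simp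
  finally show ?thesis using tent_integral(1)[OF r e] by simp
qed

lemma tent_tem: assumes e: "0 < e" shows "tem_test (tent x e)"
proof -
  have A: "\<forall>y. \<bar>tent x e y\<bar> \<le> e * exp (\<bar>x\<bar> + e) * phiw 1 y"
  proof
    fix y
    show "\<bar>tent x e y\<bar> \<le> e * exp (\<bar>x\<bar> + e) * phiw 1 y"
    proof (cases "y \<in> cball x e")
      case True
      then have "\<bar>y\<bar> \<le> \<bar>x\<bar> + e" by (auto simp: dist_real_def)
      then have "1 \<le> exp (\<bar>x\<bar> + e) * exp (- \<bar>y\<bar>)"
        by (simp add: exp_add[symmetric])
      then have "e \<le> e * (exp (\<bar>x\<bar> + e) * exp (- \<bar>y\<bar>))" using e by simp
      moreover have "\<bar>tent x e y\<bar> \<le> e" using e unfolding tent_def by auto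
      ultimately show ?thesis unfolding phiw_def by (simp add: mult.assoc)
    next
      case False then show ?thesis using e by (simp add: tent_zero phiw_def)
    qed
  qed
  have ev1: "eventually (\<lambda>y. tent x e y / phiw 1 y = 0) at_top"
    using eventually_gt_at_top[of "x + e"] by eventually_elim (simp add: tent_zero dist_real_def)
  have ev2: "eventually (\<lambda>y. tent x e y / phiw 1 y = 0) at_bot"
    using eventually_gt_at_bot[of "x - e"] by eventually_elim (simp add: tent_zero dist_real_def)
  have B: "\<exists>a. ((\<lambda>y. tent x e y / phiw 1 y) \<longlongrightarrow> a) at_top"
    by (rule exI[of _ 0], rule tendsto_eventually) (use ev1 in auto)
  have C: "\<exists>b. ((\<lambda>y. tent x e y / phiw 1 y) \<longlongrightarrow> b) at_bot"
    by (rule exI[of _ 0], rule tendsto_eventually) (use ev2 in auto)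
  have D: "\<exists>C. \<forall>y. \<bar>tent x e y\<bar> \<le> C * phiw 1 y" using A by blast
  show ?thesis unfolding tem_test_def
    apply (rule conjI[OF tent_cont])
    apply (rule exI[of _ 1])
    using D B C by simp
qed

lemma tent_bdd: "bounded (range (tent x e))"
proof -
  have "\<forall>y. norm (tent x e y) \<le> \<bar>e\<bar>" unfolding tent_def by auto
  then show ?thesis unfolding bounded_iff by blast
qed

lemma key_eventually:
  assumes r: "\<And>n. radon (Ms n)" and rM: "radon M"
    and c: "\<And>x e. 0 < e \<Longrightarrow> (\<lambda>n. integral\<^sup>L (Ms n) (tent x e)) \<longlonglongrightarrow> integral\<^sup>L M (tent x e)"
    and x: "x \<in> supp M" and e: "0 < e"
  shows "eventually (\<lambda>n. \<exists>y\<in>supp (Ms n). \<bar>y - x\<bar> \<le> e) sequentially"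
proof -
  have "eventually (\<lambda>n. integral\<^sup>L (Ms n) (tent x e) > 0) sequentially"
    using order_tendstoD(1)[OF c[OF e] tent_pos[OF rM e x]] .
  then show ?thesis
  proof eventually_elim
    case (elim n)
    then have "cball x e \<inter> supp (Ms n) \<noteq> {}" using tent_zero_int[OF r e] by force
    then show ?case by (auto simp: dist_real_def abs_minus_commute)
  qed
qed

lemma R_part:
  assumes r: "\<And>n. radon (Ms n)" and rM: "radon M"
    and c: "\<And>x e. 0 < e \<Longrightarrow> (\<lambda>n. integral\<^sup>L (Ms n) (tent x e)) \<longlonglongrightarrow> integral\<^sup>L M (tent x e)"
  shows "Rsup M \<le> liminf (\<lambda>n. Rsup (Ms n))"
  unfolding Rsup_def
proof (rule Sup_least, safe)
  fix x assume x: "x \<in> supp M"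
  show "ereal x \<le> liminf (\<lambda>n. Sup (ereal ` supp (Ms n)))"
    unfolding le_Liminf_iff
  proof (intro allI impI)
    fix y assume y: "y < ereal x"
    then obtain q :: real where q: "y < ereal q" "q < x"
      using ereal_dense2 by (metis less_ereal.simps(1))
    have ev: "eventually (\<lambda>n. \<exists>z\<in>supp (Ms n). \<bar>z - x\<bar> \<le> (x - q)/2) sequentially"
      using key_eventually[OF r rM c x, of "(x - q)/2"] q by simp
    show "eventually (\<lambda>n. y < Sup (ereal ` supp (Ms n))) sequentially"
      using ev
    proof eventually_elim
      case (elim n)
      then obtain z where z: "z \<in> supp (Ms n)" "\<bar>z - x\<bar> \<le> (x - q)/2" by blast
      have "y < ereal q" by (rule q(1))
      also have "ereal q < ereal z" using abs_le_D2[OF z(2)] q(2) by simp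
      also have "\<dots> \<le> Sup (ereal ` supp (Ms n))" using z(1) by (intro Sup_upper) auto
      finally show ?case .
    qed
  qed
qed

lemma L_part:
  assumes r: "\<And>n. radon (Ms n)" and rM: "radon M"
    and c: "\<And>x e. 0 < e \<Longrightarrow> (\<lambda>n. integral\<^sup>L (Ms n) (tent x e)) \<longlonglongrightarrow> integral\<^sup>L M (tent x e)"
  shows "limsup (\<lambda>n. Linf (Ms n)) \<le> Linf M"
  unfolding Linf_def
proof (rule Inf_greatest, safe)
  fix x assume x: "x \<in> supp M"
  show "limsup (\<lambda>n. Inf (ereal ` supp (Ms n))) \<le> ereal x"
    unfolding Limsup_le_iff
  proof (intro allI impI)
    fix y assume y: "y > ereal x"
    then obtain q :: real where q: "y > ereal q" "q > x"
      using ereal_dense2 by (metis less_ereal.simps(1))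
    have ev: "eventually (\<lambda>n. \<exists>z\<in>supp (Ms n). \<bar>z - x\<bar> \<le> (q - x)/2) sequentially"
      using key_eventually[OF r rM c x, of "(q - x)/2"] q by simp
    show "eventually (\<lambda>n. Inf (ereal ` supp (Ms n)) < y) sequentially"
      using ev
    proof eventually_elim
      case (elim n)
      then obtain z where z: "z \<in> supp (Ms n)" "\<bar>z - x\<bar> \<le> (q - x)/2" by blast
      have "Inf (ereal ` supp (Ms n)) \<le> ereal z" using z(1) by (intro Inf_lower) auto
      also have "ereal z < ereal q" using abs_le_D1[OF z(2)] q(2) by simp
      also have "\<dots> < y" by (rule q(1))
      finally show ?case .
    qed
  qed
qed

theorem corollary5p2:
  fixes \<mu>s \<nu>s :: "nat \<Rightarrow> real measure" and \<mu> \<nu> :: "real measure"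
  assumes conv: "((\<forall>n. \<mu>s n \<in> Mtem \<and> \<nu>s n \<in> Mtem) \<and> \<mu> \<in> Mtem \<and> \<nu> \<in> Mtem
                   \<and> conv_tem \<mu>s \<mu> \<and> conv_tem \<nu>s \<nu>)
               \<or> ((\<forall>n. \<mu>s n \<in> Mrap \<and> \<nu>s n \<in> Mrap) \<and> \<mu> \<in> Mrap \<and> \<nu> \<in> Mrap
                   \<and> conv_rap \<mu>s \<mu> \<and> conv_rap \<nu>s \<nu>)"
    and order: "\<And>n. Rsup (\<mu>s n) \<le> Linf (\<nu>s n)"
  shows "Rsup \<mu> \<le> liminf (\<lambda>n. Rsup (\<mu>s n))
       \<and> liminf (\<lambda>n. Rsup (\<mu>s n)) \<le> limsup (\<lambda>n. Linf (\<nu>s n))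
       \<and> limsup (\<lambda>n. Linf (\<nu>s n)) \<le> Linf \<nu>"
proof -
  have rad: "(\<forall>n. radon (\<mu>s n) \<and> radon (\<nu>s n)) \<and> radon \<mu> \<and> radon \<nu>"
    using conv unfolding Mtem_def Mrap_def by auto
  have tm: "conv_tem \<mu>s \<mu> \<and> conv_tem \<nu>s \<nu> \<or> conv_rap \<mu>s \<mu> \<and> conv_rap \<nu>s \<nu>"
    using conv by blast
  have cv1: "\<And>Ms M x e. conv_tem Ms M \<or> conv_rap Ms M \<Longrightarrow> 0 < e \<Longrightarrow>
      (\<lambda>n. integral\<^sup>L (Ms n) (tent x e)) \<longlonglongrightarrow> integral\<^sup>L M (tent x e)"
  proof -
    fix Ms M x e assume h: "conv_tem Ms M \<or> conv_rap Ms M" and e: "(0::real) < e"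
    show "(\<lambda>n. integral\<^sup>L (Ms n) (tent x e)) \<longlonglongrightarrow> integral\<^sup>L M (tent x e)"
    proof (cases "conv_tem Ms M")
      case True
      then have "\<forall>f. tem_test f \<longrightarrow> (\<lambda>n. integral\<^sup>L (Ms n) f) \<longlonglongrightarrow> integral\<^sup>L M f"
        unfolding conv_tem_def .
      then show ?thesis using tent_tem[OF e, of x] by simp
    next
      case False
      then have "conv_rap Ms M" using h by simp
      then have "\<forall>f::real\<Rightarrow>real. continuous_on UNIV f \<and> bounded (range f) \<longrightarrow>
          (\<lambda>n. integral\<^sup>L (Ms n) f) \<longlonglongrightarrow> integral\<^sup>L M f"
        unfolding conv_rap_def by (rule conjunct1)
      then show ?thesis using tent_cont[of x e] tent_bdd[of x e] by simp
    qed
  qed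
  have cv: "(\<forall>x e. 0 < e \<longrightarrow> (\<lambda>n. integral\<^sup>L (\<mu>s n) (tent x e)) \<longlonglongrightarrow> integral\<^sup>L \<mu> (tent x e))
     \<and> (\<forall>x e. 0 < e \<longrightarrow> (\<lambda>n. integral\<^sup>L (\<nu>s n) (tent x e)) \<longlonglongrightarrow> integral\<^sup>L \<nu> (tent x e))"
  proof -
    have m: "conv_tem \<mu>s \<mu> \<or> conv_rap \<mu>s \<mu>" using tm by blast
    have v: "conv_tem \<nu>s \<nu> \<or> conv_rap \<nu>s \<nu>" using tm by blast
    show ?thesis using cv1[OF m] cv1[OF v] by blast
  qed
  have 1: "Rsup \<mu> \<le> liminf (\<lambda>n. Rsup (\<mu>s n))"
    by (rule R_part) (use rad cv in auto)
  have 3: "limsup (\<lambda>n. Linf (\<nu>s n)) \<le> Linf \<nu>"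
    by (rule L_part) (use rad cv in auto)
  have "liminf (\<lambda>n. Rsup (\<mu>s n)) \<le> liminf (\<lambda>n. Linf (\<nu>s n))"
    by (rule Liminf_mono) (use order in auto)
  also have "\<dots> \<le> limsup (\<lambda>n. Linf (\<nu>s n))" by (rule Liminf_le_Limsup) simp
  finally show ?thesis using 1 3 by simp
qed

end
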